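(* Let $H\in M_N(\mathbb C)$ be a complex Hadamard matrix with rows $H_1,\dots,H_N\in\mathbb T^N$. Define $U_{ij}\in M_N(\mathbb C)$ as the orthogonal projection onto $\mathbb C\cdot(H_i/H_j)$ (coordinatewise quotient). Then $$U_{ij}=\frac{1}{N}\left(\frac{H_{ik}H_{jl}}{H_{il}H_{jk}}\right)_{kl},$$ the matrix $U=(U_{ij})$ is magic, the matrix $U'$ defined by $(U'_{ij})_{kl}=(U_{kl})_{ij}$ is magic as well (so $U$ is a projective model), and $U'(H)=U(H^t)$.
   Context: A complex Hadamard matrix is an $N\times N$ matrix with all entries of modulus $1$ and pairwise orthogonal rows. A square matrix of operators is magic if its entries are orthogonal projections and each row and column sums to $1$. $U(H)$ denotes the matrix $(U_{ij})$ constructed from $H$ as in the statement. *)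

theory Defs
  imports "HOL-Analysis.Analysis"
begin

definition complex_hadamard :: "complex^'n^'n \<Rightarrow> bool" where
  "complex_hadamard H \<longleftrightarrow>
     (\<forall>i k. norm (H$i$k) = 1) \<and>
     (\<forall>i j. i \<noteq> j \<longrightarrow> (\<Sum>k\<in>UNIV. H$i$k * cnj (H$j$k)) = 0)"

definition cadjoint :: "complex^'n^'n \<Rightarrow> complex^'n^'n" where
  "cadjoint A = (\<chi> i j. cnj (A$j$i))"

definition is_orth_proj :: "complex^'n^'n \<Rightarrow> bool" where
  "is_orth_proj P \<longleftrightarrow> P ** P = P \<and> cadjoint P = P"

text \<open>The orthogonal projection onto the line C*v (v nonzero):
  x \<mapsto> (<v,x>/<v,v>) v, i.e. the matrix (v_k conj(v_l) / ||v||^2)_{kl}.\<close>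
definition proj_line :: "complex^'n \<Rightarrow> complex^'n^'n" where
  "proj_line v = (\<chi> k l. v$k * cnj (v$l) / (\<Sum>m\<in>UNIV. v$m * cnj (v$m)))"

definition magic :: "('i::finite \<Rightarrow> 'i \<Rightarrow> complex^'m^'m) \<Rightarrow> bool" where
  "magic M \<longleftrightarrow> (\<forall>i j. is_orth_proj (M i j)) \<and>
     (\<forall>i. (\<Sum>j\<in>UNIV. M i j) = mat 1) \<and>
     (\<forall>j. (\<Sum>i\<in>UNIV. M i j) = mat 1)"

definition Umat :: "complex^'n^'n \<Rightarrow> 'n \<Rightarrow> 'n \<Rightarrow> complex^'n^'n" where
  "Umat H i j = proj_line (\<chi> k. H$i$k / H$j$k)"

definition Uprime :: "('n \<Rightarrow> 'n \<Rightarrow> complex^'n^'n) \<Rightarrow> 'n \<Rightarrow> 'n \<Rightarrow> complex^'n^'n" where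
  "Uprime U i j = (\<chi> k l. (U k l)$i$j)"

end

theory Submission imports Defs begin

lemma unit_cnj: "norm (z::complex) = 1 \<Longrightarrow> z * cnj z = 1"
  by (metis complex_norm_square mult.commute of_real_1 power_one)

lemma unit_nz: "norm (z::complex) = 1 \<Longrightarrow> z \<noteq> 0"
  by auto

lemma unit_cnj_inv: "norm (z::complex) = 1 \<Longrightarrow> cnj z = 1 / z"
  using unit_cnj[of z] unit_nz[of z] by (simp add: field_simps)

lemma row_orth:
  assumes "complex_hadamard (H::complex^'n^'n)"
  shows "(\<Sum>k\<in>UNIV. H$i$k * cnj (H$j$k)) = (if i = j then of_nat CARD('n) else 0)"
  using assms unfolding complex_hadamard_def by (auto simp: unit_cnj)

lemma col_orth:
  assumes "complex_hadamard (H::complex^'n^'n)"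
  shows "(\<Sum>i\<in>UNIV. H$i$k * cnj (H$i$l)) = (if k = l then of_nat CARD('n) else 0)"
proof -
  define N where "N = (of_nat CARD('n) :: complex)"
  have N0: "N \<noteq> 0" unfolding N_def by simp
  define A' where "A' = (\<chi> k j. cnj (H$j$k) / N)"
  have "H ** A' = mat 1"
    unfolding A'_def matrix_matrix_mult_def mat_def
    by (simp add: vec_eq_iff sum_divide_distrib[symmetric] row_orth[OF assms] N_def)
  hence "A' ** H = mat 1" using matrix_left_right_inverse by blast
  hence "(A' ** H)$l$k = mat 1 $l$k" by simp
  hence "(\<Sum>i\<in>UNIV. cnj (H$i$l) * H$i$k) / N = (if k = l then 1 else 0)"
    unfolding A'_def matrix_matrix_mult_def mat_def
    by (simp add: sum_divide_distrib[symmetric])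
  thus ?thesis using N0 unfolding N_def[symmetric]
    by (simp add: mult.commute split: if_splits)
qed

lemma transpose_hadamard:
  assumes "complex_hadamard (H::complex^'n^'n)"
  shows "complex_hadamard (transpose H)"
  using assms col_orth[OF assms] unfolding complex_hadamard_def transpose_def by auto

lemma proj_line_orth:
  fixes v :: "complex^'n"
  assumes "(\<Sum>m\<in>UNIV. v$m * cnj (v$m)) \<noteq> 0"
  shows "is_orth_proj (proj_line v)"
proof -
  define s where "s = (\<Sum>m\<in>UNIV. v$m * cnj (v$m))"
  have s0: "s \<noteq> 0" using assms s_def by simp
  have cs: "cnj s = s" unfolding s_def by (simp add: mult.commute)
  have "proj_line v ** proj_line v = proj_line v"
  proof -
    have "\<And>k l. (\<Sum>m\<in>UNIV. v$k * cnj (v$m) / s * (v$m * cnj (v$l) / s)) = v$k * cnj (v$l) / s"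
    proof -
      fix k l
      have "(\<Sum>m\<in>UNIV. v$k * cnj (v$m) / s * (v$m * cnj (v$l) / s))
          = (\<Sum>m\<in>UNIV. v$m * cnj (v$m)) * (v$k * cnj (v$l) / s / s)"
        by (simp add: sum_distrib_right sum_distrib_left sum_divide_distrib[symmetric] algebra_simps)
      also have "\<dots> = v$k * cnj (v$l) / s" using s0 by (simp add: s_def[symmetric] field_simps)
      finally show "?thesis k l" .
    qed
    thus ?thesis unfolding proj_line_def matrix_matrix_mult_def s_def[symmetric]
      by (simp add: vec_eq_iff)
  qed
  moreover have "cadjoint (proj_line v) = proj_line v"
    unfolding cadjoint_def proj_line_def s_def[symmetric]
    by (simp add: vec_eq_iff cs mult.commute)
  ultimately show ?thesis unfolding is_orth_proj_def by simp
qed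

lemma Umat_formula:
  assumes "complex_hadamard (H::complex^'n^'n)"
  shows "Umat H i j = (\<chi> k l. (1 / of_nat CARD('n)) * ((H$i$k * H$j$l) / (H$i$l * H$j$k)))"
proof -
  have u: "\<And>a b. norm (H$a$b) = 1" using assms unfolding complex_hadamard_def by auto
  define v where "v = (\<chi> k. H$i$k / H$j$k)"
  have vn: "\<And>k. norm (v$k) = 1" unfolding v_def using u by (simp add: norm_divide)
  have s: "(\<Sum>m\<in>UNIV. v$m * cnj (v$m)) = of_nat CARD('n)"
    using vn by (simp add: unit_cnj)
  show ?thesis unfolding Umat_def v_def[symmetric] proj_line_def s
    using u unit_nz vn
    by (simp add: vec_eq_iff unit_cnj_inv v_def field_simps)
qed

lemma Umat_magic:
  assumes "complex_hadamard (H::complex^'n^'n)"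
  shows "magic (Umat H)"
proof -
  have u: "\<And>a b. norm (H$a$b) = 1" using assms unfolding complex_hadamard_def by auto
  have nz: "\<And>a b. H$a$b \<noteq> 0" using u unit_nz by blast
  have inv: "\<And>a b. 1 / H$a$b = cnj (H$a$b)" using u unit_cnj_inv by metis
  define N where "N = (of_nat CARD('n) :: complex)"
  have N0: "N \<noteq> 0" unfolding N_def by simp
  have op: "is_orth_proj (Umat H i j)" for i j
    unfolding Umat_def
  proof (rule proj_line_orth)
    have "\<And>m. (H$i$m / H$j$m) * cnj (H$i$m / H$j$m) = 1"
      using u by (simp add: unit_cnj norm_divide)
    thus "(\<Sum>m\<in>UNIV. (\<chi> k. H$i$k / H$j$k)$m * cnj ((\<chi> k. H$i$k / H$j$k)$m)) \<noteq> 0"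
      by simp
  qed
  have rows: "(\<Sum>j\<in>UNIV. Umat H i j) = mat 1" for i
  proof -
    have "(\<Sum>j\<in>UNIV. 1 / N * (H$i$k * H$j$l / (H$i$l * H$j$k)))
        = 1 / N * (H$i$k / H$i$l) * (\<Sum>j\<in>UNIV. H$j$l * cnj (H$j$k))" for k l
    proof -
      have "\<And>j. H$i$k * H$j$l / (H$i$l * H$j$k) = (H$i$k / H$i$l) * (H$j$l * (1 / H$j$k))"
        by simp
      thus ?thesis by (simp add: inv sum_distrib_left mult.assoc)
    qed
    hence "\<And>k l. (\<Sum>j\<in>UNIV. 1 / N * (H$i$k * H$j$l / (H$i$l * H$j$k))) = mat 1 $ k $ l"
      using N0 nz by (simp add: col_orth[OF assms] N_def[symmetric] mat_def)
    thus ?thesis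
      by (simp add: Umat_formula[OF assms] vec_eq_iff N_def[symmetric])
  qed
  have cols: "(\<Sum>i\<in>UNIV. Umat H i j) = mat 1" for j
  proof -
    have "(\<Sum>i\<in>UNIV. 1 / N * (H$i$k * H$j$l / (H$i$l * H$j$k)))
        = 1 / N * (H$j$l / H$j$k) * (\<Sum>i\<in>UNIV. H$i$k * cnj (H$i$l))" for k l
    proof -
      have "\<And>i. H$i$k * H$j$l / (H$i$l * H$j$k) = (H$j$l / H$j$k) * (H$i$k * (1 / H$i$l))"
        by (simp add: mult.commute)
      thus ?thesis by (simp add: inv sum_distrib_left mult.assoc)
    qed
    hence "\<And>k l. (\<Sum>i\<in>UNIV. 1 / N * (H$i$k * H$j$l / (H$i$l * H$j$k))) = mat 1 $ k $ l"
      using N0 nz by (simp add: col_orth[OF assms] N_def[symmetric] mat_def)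
    thus ?thesis
      by (simp add: Umat_formula[OF assms] vec_eq_iff N_def[symmetric])
  qed
  show ?thesis unfolding magic_def using op rows cols by blast
qed

theorem proposition2p3:
  fixes H :: "complex^'n^'n"
  assumes "complex_hadamard H"
  shows "(\<forall>i j. Umat H i j =
            (\<chi> k l. (1 / of_nat CARD('n)) * ((H$i$k * H$j$l) / (H$i$l * H$j$k))))
       \<and> magic (Umat H)
       \<and> magic (Uprime (Umat H))
       \<and> (\<forall>i j. Uprime (Umat H) i j = Umat (transpose H) i j)"
proof -
  have T: "complex_hadamard (transpose H)" by (rule transpose_hadamard[OF assms])
  have eq: "Uprime (Umat H) i j = Umat (transpose H) i j" for i j
    unfolding Uprime_def Umat_formula[OF assms] Umat_formula[OF T]
    by (simp add: vec_eq_iff transpose_def mult.commute)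
  have "Uprime (Umat H) = Umat (transpose H)" using eq by blast
  thus ?thesis using Umat_formula[OF assms] Umat_magic[OF assms] Umat_magic[OF T] eq by simp
qed

end
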